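(* Let $\mathcal A=\{a_1,\dots,a_n\}\subset\mathbb Z^d$ with $n\ge d+2$ and $d$-dimensional convex hull, and let $\Delta_1,\Delta_2$ be two $d$-simplices of $\mathcal A$ which share a facet. Then there exists a regular subdivision of $\mathcal A$ containing $\Delta_1$ and $\Delta_2$, so the cone $\mathcal C_{\Delta_1,\Delta_2}$ is nonempty. Moreover, there exists a regular triangulation of $\mathcal A$ containing both simplices.
   Context: A $d$-simplex of $\mathcal A$ is a subset of $d+1$ affinely independent points. Two $d$-simplices share a facet if the intersection of their convex hulls is a facet (codimension-one face) of both. Regular subdivisions: for $h\in\mathbb R^n$, lift $a_j$ to $(a_j,h_j)\in\mathbb R^{d+1}$; lower faces of the convex hull of the lifted points are those with an inner normal of positive last coordinate; each lower face $F$ gives the cell $\{a_j:(a_j,h_j)\in F\}$; the collection of cells is the regular subdivision induced by $h$. It contains a simplex if that simplex is one of its cells. $\mathcal C_{\Delta_1,\Delta_2}$ is the set of $h\in\mathbb R^n$ inducing a regular subdivision containing $\Delta_1$ and $\Delta_2$. A regular triangulation is a regular subdivision each of whose cells consists of affinely independent points which are exactly the vertices of its convex hull. *)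

theory Defs
  imports "HOL-Analysis.Analysis"
begin

text \<open>Point configurations are finite sets of points of \<open>real^'d\<close>; a height vector
  \<open>h \<in> \<real>^n\<close> is a function assigning the height \<open>h a\<close> to each point \<open>a\<close> of the configuration
  (values outside the configuration are irrelevant).\<close>

definition lift :: "(real^'d) set \<Rightarrow> (real^'d \<Rightarrow> real) \<Rightarrow> ((real^'d) \<times> real) set" where
  "lift A h = (\<lambda>a. (a, h a)) ` A"

definition lower_face :: "(real^'d) set \<Rightarrow> (real^'d \<Rightarrow> real) \<Rightarrow> ((real^'d) \<times> real) set \<Rightarrow> bool" where
  "lower_face A h F \<longleftrightarrow> F face_of convex hull (lift A h) \<and> F \<noteq> {} \<and>
     (\<exists>w :: (real^'d) \<times> real. snd w > 0 \<and>
        F = {p \<in> convex hull (lift A h). \<forall>q \<in> convex hull (lift A h). w \<bullet> p \<le> w \<bullet> q})"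

definition cell_of :: "(real^'d) set \<Rightarrow> (real^'d \<Rightarrow> real) \<Rightarrow> ((real^'d) \<times> real) set \<Rightarrow> (real^'d) set" where
  "cell_of A h F = {a \<in> A. (a, h a) \<in> F}"

definition regular_subdivision :: "(real^'d) set \<Rightarrow> (real^'d \<Rightarrow> real) \<Rightarrow> (real^'d) set set" where
  "regular_subdivision A h = {cell_of A h F | F. lower_face A h F}"

definition regular_triangulation :: "(real^'d) set \<Rightarrow> (real^'d \<Rightarrow> real) \<Rightarrow> bool" where
  "regular_triangulation A h \<longleftrightarrow>
     (\<forall>C \<in> regular_subdivision A h. \<not> affine_dependent C \<and> {x. x extreme_point_of convex hull C} = C)"

definition d_simplex_of :: "(real^'d) set \<Rightarrow> (real^'d) set \<Rightarrow> bool" where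
  "d_simplex_of A S \<longleftrightarrow> S \<subseteq> A \<and> card S = CARD('d) + 1 \<and> \<not> affine_dependent S"

definition is_facet :: "'a::euclidean_space set \<Rightarrow> 'a set \<Rightarrow> bool" where
  "is_facet F P \<longleftrightarrow> F face_of P \<and> aff_dim F = aff_dim P - 1"

definition share_facet :: "(real^'d) set \<Rightarrow> (real^'d) set \<Rightarrow> bool" where
  "share_facet S1 S2 \<longleftrightarrow>
     is_facet (convex hull S1 \<inter> convex hull S2) (convex hull S1) \<and>
     is_facet (convex hull S1 \<inter> convex hull S2) (convex hull S2)"

definition cone_C :: "(real^'d) set \<Rightarrow> (real^'d) set \<Rightarrow> (real^'d) set \<Rightarrow> (real^'d \<Rightarrow> real) set" where
  "cone_C A S1 S2 = {h. S1 \<in> regular_subdivision A h \<and> S2 \<in> regular_subdivision A h}"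

end

theory Submission
  imports Defs "HOL-Computational_Algebra.Polynomial"
begin

lemma cell_in_subdiv:
  fixes A S :: "(real^'d) set" and v :: "real^'d" and h :: "real^'d \<Rightarrow> real"
  assumes fin: "finite A" and SA: "S \<subseteq> A" and Sne: "S \<noteq> {}"
    and onS: "\<forall>a\<in>S. h a - v \<bullet> a = c" and offS: "\<forall>a\<in>A-S. h a - v \<bullet> a > c"
  shows "S \<in> regular_subdivision A h"
proof -
  define w where "w = (-v, 1::real)"
  have wv: "w \<bullet> (a, h a) = h a - v \<bullet> a" for a by (simp add: w_def)
  define K where "K = convex hull (lift A h)"
  have "lift A h \<subseteq> {q. w \<bullet> q \<ge> c}"
    using onS offS by (force simp: lift_def wv)
  then have Kge: "K \<subseteq> {q. w \<bullet> q \<ge> c}"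
    unfolding K_def by (intro hull_minimal) (auto simp: convex_halfspace_ge)
  have inK: "(a, h a) \<in> K" if "a \<in> A" for a
    unfolding K_def lift_def using that by (intro hull_inc) auto
  obtain a0 where a0: "a0 \<in> S" using Sne by auto
  have a0v: "w \<bullet> (a0, h a0) = c" using onS a0 wv by auto
  define F where "F = {p\<in>K. \<forall>q\<in>K. w \<bullet> p \<le> w \<bullet> q}"
  have Feq: "F = K \<inter> {p. w \<bullet> p = c}"
  proof
    show "F \<subseteq> K \<inter> {p. w \<bullet> p = c}"
    proof
      fix p assume "p \<in> F"
      then have "p \<in> K" "w \<bullet> p \<le> w \<bullet> (a0, h a0)" using inK a0 SA unfolding F_def by auto
      then show "p \<in> K \<inter> {p. w \<bullet> p = c}" using Kge a0v by force
    qed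
    show "K \<inter> {p. w \<bullet> p = c} \<subseteq> F" using Kge unfolding F_def by force
  qed
  have face: "F face_of K"
    unfolding Feq K_def
    by (rule face_of_Int_supporting_hyperplane_ge) (use Kge K_def in auto)
  have lf: "lower_face A h F"
    unfolding lower_face_def
  proof (intro conjI)
    show "F face_of convex hull lift A h" using face K_def by simp
    show "F \<noteq> {}" using Feq inK a0 SA a0v by auto
    show "\<exists>w::(real^'d)\<times>real. snd w > 0 \<and>
        F = {p \<in> convex hull (lift A h). \<forall>q \<in> convex hull (lift A h). w \<bullet> p \<le> w \<bullet> q}"
      by (rule exI[of _ w]) (simp add: w_def F_def K_def)
  qed
  have "cell_of A h F = S"
    unfolding cell_of_def Feq using inK onS offS SA wv by force
  then show ?thesis unfolding regular_subdivision_def using lf by blast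
qed

lemma cell_affine:
  fixes A C :: "(real^'d) set" and h :: "real^'d \<Rightarrow> real"
  assumes "C \<in> regular_subdivision A h"
  shows "\<exists>v c. \<forall>a\<in>C. h a = v \<bullet> a + c"
proof -
  obtain F where F: "lower_face A h F" and C: "C = cell_of A h F"
    using assms unfolding regular_subdivision_def by auto
  obtain w :: "(real^'d)\<times>real" where w: "snd w > 0"
    and Fw: "F = {p \<in> convex hull (lift A h). \<forall>q \<in> convex hull (lift A h). w \<bullet> p \<le> w \<bullet> q}"
    using F unfolding lower_face_def by blast
  show ?thesis
  proof (cases "C = {}")
    case True then show ?thesis by auto
  next
    case False
    then obtain a0 where a0: "a0 \<in> C" by auto
    define m where "m = w \<bullet> (a0, h a0)"
    have eq: "w \<bullet> (a, h a) = m" if "a \<in> C" for a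
    proof -
      have "(a, h a) \<in> F" "(a0, h a0) \<in> F" using that a0 C unfolding cell_of_def by auto
      then show ?thesis unfolding m_def Fw by (auto intro: order_antisym)
    qed
    show ?thesis
    proof (intro exI ballI)
      fix a assume "a \<in> C"
      then have "fst w \<bullet> a + snd w * h a = m" using eq[of a] by (cases w) simp
      then show "h a = (- (1 / snd w)) *\<^sub>R fst w \<bullet> a + m / snd w"
        using w by (simp add: field_simps)
    qed
  qed
qed


lemma opposite_sides:
  fixes T :: "(real^'d) set" and u :: "real^'d"
  assumes finT: "finite T" and Tne: "T \<noteq> {}" and rT: "r \<notin> T" and sT: "s \<notin> T"
    and hull2: "affine hull (insert s T) = UNIV"
    and inter: "convex hull (insert r T) \<inter> convex hull (insert s T) \<subseteq> {x. u \<bullet> x = b}"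
    and onT: "\<forall>t\<in>T. u \<bullet> t = b" and rpos: "u \<bullet> r > b" and sne: "u \<bullet> s \<noteq> b"
  shows "u \<bullet> s < b"
proof (rule ccontr)
  assume "\<not> u \<bullet> s < b"
  with sne have spos: "u \<bullet> s > b" by auto
  have fin2: "finite (insert s T)" using finT by simp
  obtain \<alpha> where \<alpha>1: "sum \<alpha> (insert s T) = 1" and \<alpha>r: "(\<Sum>x\<in>insert s T. \<alpha> x *\<^sub>R x) = r"
    using hull2 affine_hull_finite[OF fin2] by blast
  have s1: "\<alpha> s + sum \<alpha> T = 1" using \<alpha>1 finT sT by simp
  have sr: "\<alpha> s *\<^sub>R s + (\<Sum>x\<in>T. \<alpha> x *\<^sub>R x) = r" using \<alpha>r finT sT by simp
  have "u \<bullet> r = \<alpha> s * (u \<bullet> s) + (\<Sum>x\<in>T. \<alpha> x * (u \<bullet> x))"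
    using sr[symmetric] by (simp add: inner_add_right inner_sum_right)
  also have "(\<Sum>x\<in>T. \<alpha> x * (u \<bullet> x)) = (\<Sum>x\<in>T. \<alpha> x * b)" using onT by simp
  also have "\<dots> = b * sum \<alpha> T" by (simp add: sum_distrib_left mult.commute)
  finally have eqr: "u \<bullet> r = \<alpha> s * (u \<bullet> s) + b * sum \<alpha> T" .
  have sT': "sum \<alpha> T = 1 - \<alpha> s" using s1 by simp
  have "u \<bullet> r - b = \<alpha> s * (u \<bullet> s - b)" using eqr unfolding sT' by (simp add: algebra_simps)
  with rpos spos have \<alpha>spos: "\<alpha> s > 0"
    by (metis diff_gt_0_iff_gt zero_less_mult_pos2)
  define n where "n = real (card T)"
  have npos: "n > 0" using finT Tne by (simp add: n_def card_gt_0_iff)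
  define K where "K = (\<Sum>t\<in>T. \<bar>\<alpha> t\<bar>)"
  have K0: "K \<ge> 0" unfolding K_def by (simp add: sum_nonneg)
  have Kge: "\<bar>\<alpha> t\<bar> \<le> K" if "t \<in> T" for t
    unfolding K_def using finT that by (intro member_le_sum) auto
  define \<epsilon> where "\<epsilon> = 1 / (1 + n * K)"
  have nK: "1 + n * K > 0" using npos K0 by (simp add: add_pos_nonneg)
  have \<epsilon>pos: "\<epsilon> > 0" and \<epsilon>le: "\<epsilon> \<le> 1" using nK npos K0 by (auto simp: \<epsilon>_def field_simps)
  have k0: "1 - \<epsilon> = n * K * \<epsilon>" unfolding \<epsilon>_def using nK by (simp add: field_simps)
  have key: "(1 - \<epsilon>) / n = \<epsilon> * K" unfolding k0 using npos by simp
  define x0 where "x0 = (\<Sum>t\<in>T. (1/n) *\<^sub>R t)"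
  define y where "y = (1 - \<epsilon>) *\<^sub>R x0 + \<epsilon> *\<^sub>R r"
  have x0T: "x0 \<in> convex hull T"
    unfolding convex_hull_finite[OF finT] x0_def
    by (rule CollectI, rule exI[of _ "\<lambda>_. 1/n"]) (use npos in \<open>simp add: n_def\<close>)
  have "x0 \<in> convex hull (insert r T)" using x0T hull_mono[of T "insert r T"] by blast
  moreover have "r \<in> convex hull (insert r T)" by (simp add: hull_inc)
  ultimately have y1: "y \<in> convex hull (insert r T)"
    unfolding y_def using \<epsilon>pos \<epsilon>le
    by (intro convexD[OF convex_convex_hull]) auto
  define \<beta> where "\<beta> x = (if x = s then \<epsilon> * \<alpha> s else (1 - \<epsilon>) / n + \<epsilon> * \<alpha> x)" for x
  have \<beta>nn: "\<forall>x\<in>insert s T. 0 \<le> \<beta> x"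
  proof
    fix x assume x: "x \<in> insert s T"
    show "0 \<le> \<beta> x"
    proof (cases "x = s")
      case True then show ?thesis using \<epsilon>pos \<alpha>spos by (simp add: \<beta>_def)
    next
      case False
      then have xT: "x \<in> T" using x by auto
      have "\<epsilon> * \<bar>\<alpha> x\<bar> \<le> \<epsilon> * K" using Kge[OF xT] \<epsilon>pos by (simp add: mult_left_mono)
      moreover have "- (\<epsilon> * \<bar>\<alpha> x\<bar>) \<le> \<epsilon> * \<alpha> x" using \<epsilon>pos
        by (metis abs_ge_minus_self abs_mult abs_of_pos minus_le_iff)
      ultimately show ?thesis using False key by (simp add: \<beta>_def)
    qed
  qed
  have sumT: "(\<Sum>x\<in>T. \<beta> x) = (1 - \<epsilon>) + \<epsilon> * sum \<alpha> T"
  proof -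
    have "(\<Sum>x\<in>T. \<beta> x) = (\<Sum>x\<in>T. (1 - \<epsilon>) / n + \<epsilon> * \<alpha> x)"
      using sT by (intro sum.cong) (auto simp: \<beta>_def)
    also have "\<dots> = (1 - \<epsilon>) + \<epsilon> * sum \<alpha> T"
      using npos by (simp add: sum.distrib sum_distrib_left n_def)
    finally show ?thesis .
  qed
  have "sum \<beta> (insert s T) = \<beta> s + sum \<beta> T" using finT sT by simp
  also have "\<dots> = (1 - \<epsilon>) + \<epsilon> * (\<alpha> s + sum \<alpha> T)" unfolding sumT by (simp add: \<beta>_def algebra_simps)
  finally have \<beta>1: "sum \<beta> (insert s T) = 1" using s1 by simp
  have vT: "(\<Sum>x\<in>T. \<beta> x *\<^sub>R x) = (1 - \<epsilon>) *\<^sub>R x0 + \<epsilon> *\<^sub>R (\<Sum>x\<in>T. \<alpha> x *\<^sub>R x)"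
  proof -
    have "(\<Sum>x\<in>T. \<beta> x *\<^sub>R x) = (\<Sum>x\<in>T. ((1 - \<epsilon>) / n) *\<^sub>R x + (\<epsilon> * \<alpha> x) *\<^sub>R x)"
      using sT by (intro sum.cong) (auto simp: \<beta>_def scaleR_add_left)
    also have "\<dots> = (1 - \<epsilon>) *\<^sub>R x0 + \<epsilon> *\<^sub>R (\<Sum>x\<in>T. \<alpha> x *\<^sub>R x)"
      by (simp add: sum.distrib x0_def scaleR_sum_right)
    finally show ?thesis .
  qed
  have "(\<Sum>x\<in>insert s T. \<beta> x *\<^sub>R x) = y"
    using finT sT vT sr[symmetric] by (simp add: \<beta>_def y_def scaleR_add_right algebra_simps)
  then have y2: "y \<in> convex hull (insert s T)"
    unfolding convex_hull_finite[OF fin2] using \<beta>nn \<beta>1 by blast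
  have "u \<bullet> y = b" using inter y1 y2 by blast
  moreover have "u \<bullet> x0 = b"
  proof -
    have "u \<bullet> x0 = (\<Sum>t\<in>T. (1/n) * b)" unfolding x0_def using onT
      by (simp add: inner_sum_right)
    also have "\<dots> = b" using npos by (simp add: n_def)
    finally show ?thesis .
  qed
  ultimately have "(1 - \<epsilon>) * b + \<epsilon> * (u \<bullet> r) = b"
    unfolding y_def by (simp add: inner_add_right)
  then have "\<epsilon> * (u \<bullet> r - b) = 0" by (simp add: algebra_simps)
  then show False using \<epsilon>pos rpos by simp
qed

lemma Z_dep:
  fixes T :: "(real^'d) set" and u :: "real^'d"
  assumes finT: "finite T" and rT: "r \<notin> T" and sT: "s \<notin> T" and rs: "r \<noteq> s"
    and indT: "\<not> affine_dependent T"
    and onT: "\<forall>t\<in>T. u \<bullet> t = b" and rpos: "u \<bullet> r > b" and sneg: "u \<bullet> s < b"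
    and W0: "sum W (insert r (insert s T)) = 0"
    and Wv: "(\<Sum>z\<in>insert r (insert s T). W z *\<^sub>R z) = 0"
    and Wnz: "\<exists>z\<in>insert r (insert s T). W z \<noteq> 0"
  shows "(\<Sum>z\<in>insert r (insert s T). W z * \<bar>u \<bullet> z - b\<bar>) \<noteq> 0"
proof -
  let ?Z = "insert r (insert s T)"
  have finZ: "finite ?Z" using finT by simp
  have "(\<Sum>z\<in>?Z. W z * (u \<bullet> z - b)) = u \<bullet> (\<Sum>z\<in>?Z. W z *\<^sub>R z) - b * sum W ?Z"
    by (simp add: inner_sum_right sum_subtractf right_diff_distrib sum_distrib_left mult.commute)
  also have "\<dots> = 0" using W0 Wv by simp
  finally have e0: "(\<Sum>z\<in>?Z. W z * (u \<bullet> z - b)) = 0" .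
  have T0: "(\<Sum>z\<in>T. W z * (u \<bullet> z - b)) = 0" "(\<Sum>z\<in>T. W z * \<bar>u \<bullet> z - b\<bar>) = 0"
    using onT by simp_all
  have e1: "W r * (u \<bullet> r - b) + W s * (u \<bullet> s - b) = 0"
    using e0 finT rT sT rs T0 by simp
  have abs_r: "\<bar>u \<bullet> r - b\<bar> = u \<bullet> r - b" and abs_s: "\<bar>u \<bullet> s - b\<bar> = -(u \<bullet> s - b)"
    using rpos sneg by auto
  have val: "(\<Sum>z\<in>?Z. W z * \<bar>u \<bullet> z - b\<bar>) = 2 * (W r * (u \<bullet> r - b))"
    using finT rT sT rs T0 e1 abs_r abs_s by (simp add: algebra_simps)
  show ?thesis
  proof
    assume "(\<Sum>z\<in>?Z. W z * \<bar>u \<bullet> z - b\<bar>) = 0"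
    then have Wr: "W r = 0" using val rpos by simp
    then have Ws: "W s = 0" using e1 sneg by simp
    have "sum W T = 0" using W0 Wr Ws finT rT sT rs by simp
    moreover have "(\<Sum>z\<in>T. W z *\<^sub>R z) = 0" using Wv Wr Ws finT rT sT rs by simp
    moreover have "\<exists>z\<in>T. W z \<noteq> 0" using Wnz Wr Ws by auto
    ultimately have "affine_dependent T" using affine_dependent_explicit_finite[OF finT] by blast
    then show False using indT by simp
  qed
qed


lemma facet_structure:
  fixes A S1 S2 :: "(real^'d) set"
  assumes d1: "d_simplex_of A S1" and d2: "d_simplex_of A S2" and sh: "share_facet S1 S2"
  shows "\<exists>T r s. S1 = insert r T \<and> S2 = insert s T \<and> r \<notin> T \<and> s \<notin> T \<and> card T = CARD('d)
     \<and> convex hull S1 \<inter> convex hull S2 = convex hull T"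
proof -
  have i1: "\<not> affine_dependent S1" and c1: "card S1 = CARD('d) + 1"
    and i2: "\<not> affine_dependent S2" and c2: "card S2 = CARD('d) + 1"
    using d1 d2 unfolding d_simplex_of_def by auto
  let ?I = "convex hull S1 \<inter> convex hull S2"
  have a1: "aff_dim (convex hull S1) = int CARD('d)"
    using aff_dim_affine_independent[OF i1] c1 aff_dim_convex_hull[of S1] by simp
  have a2: "aff_dim (convex hull S2) = int CARD('d)"
    using aff_dim_affine_independent[OF i2] c2 aff_dim_convex_hull[of S2] by simp
  have gen: "\<exists>T r. S = insert r T \<and> r \<notin> T \<and> card T = CARD('d) \<and> ?I = convex hull T"
    if i: "\<not> affine_dependent S" and c: "card S = CARD('d) + 1"
      and a: "aff_dim (convex hull S) = int CARD('d)" and fa: "is_facet ?I (convex hull S)" for S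
  proof -
    have fin: "finite S" using c by (intro card_ge_0_finite) simp
    obtain T where TS: "T \<subseteq> S" and IT: "?I = convex hull T"
      using fa face_of_convex_hull_affine_independent[OF i] unfolding is_facet_def by blast
    have iT: "\<not> affine_dependent T" using i TS affine_dependent_subset by blast
    have "aff_dim (convex hull T) = int CARD('d) - 1" using fa a IT unfolding is_facet_def by simp
    then have "int (card T) = int CARD('d)"
      using aff_dim_affine_independent[OF iT] aff_dim_convex_hull[of T] by simp
    then have cT: "card T = CARD('d)" by simp
    have "card (S - T) = 1" using card_Diff_subset[OF finite_subset[OF TS fin] TS] c cT by simp
    then obtain r where r: "S - T = {r}" by (meson card_1_singletonE)
    then have "S = insert r T" "r \<notin> T" using TS by auto
    then show ?thesis using cT IT by blast
  qed
  obtain T1 r where S1: "S1 = insert r T1" "r \<notin> T1" "card T1 = CARD('d)" "?I = convex hull T1"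
    using gen[OF i1 c1 a1] sh unfolding share_facet_def by blast
  obtain T2 s where S2: "S2 = insert s T2" "s \<notin> T2" "card T2 = CARD('d)" "?I = convex hull T2"
    using gen[OF i2 c2 a2] sh unfolding share_facet_def by blast
  have iT1: "\<not> affine_dependent T1" using i1 S1(1) affine_dependent_subset by blast
  have iT2: "\<not> affine_dependent T2" using i2 S2(1) affine_dependent_subset by blast
  have "T1 = T2"
  proof -
    have "x \<in> T1 \<longleftrightarrow> x \<in> T2" for x
      using extreme_point_of_convex_hull_affine_independent[OF iT1, of x]
        extreme_point_of_convex_hull_affine_independent[OF iT2, of x] S1(4) S2(4) by simp
    then show ?thesis by blast
  qed
  then show ?thesis using S1 S2 by blast
qed


theorem proposition2p5:
  fixes A :: "(real^'d) set" and S1 S2 :: "(real^'d) set"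
  assumes "finite A"
    and "\<forall>a \<in> A. \<forall>i. a $ i \<in> \<int>"
    and "card A \<ge> CARD('d) + 2"
    and "aff_dim (convex hull A) = int CARD('d)"
    and "d_simplex_of A S1" and "d_simplex_of A S2"
    and "share_facet S1 S2"
  shows "(\<exists>h. S1 \<in> regular_subdivision A h \<and> S2 \<in> regular_subdivision A h)
       \<and> cone_C A S1 S2 \<noteq> {}
       \<and> (\<exists>h. regular_triangulation A h \<and> S1 \<in> regular_subdivision A h \<and> S2 \<in> regular_subdivision A h)"
proof -
  note finA = assms(1)
  obtain T r s where S1: "S1 = insert r T" and S2: "S2 = insert s T" and rT: "r \<notin> T" and sT: "s \<notin> T"
    and cT: "card T = CARD('d)" and IT: "convex hull S1 \<inter> convex hull S2 = convex hull T"
    using facet_structure[OF assms(5-7)] by blast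
  have i1: "\<not> affine_dependent S1" and c1: "card S1 = CARD('d) + 1" and A1: "S1 \<subseteq> A"
    and i2: "\<not> affine_dependent S2" and c2: "card S2 = CARD('d) + 1" and A2: "S2 \<subseteq> A"
    using assms(5,6) unfolding d_simplex_of_def by auto
  have finT: "finite T" and Tne: "T \<noteq> {}" using cT by (auto intro: card_ge_0_finite)
  have indT: "\<not> affine_dependent T" using i1 S1 affine_dependent_subset by blast
  have "aff_dim T = int DIM(real^'d) - 1"
    using aff_dim_affine_independent[OF indT] cT by simp
  then obtain u0 b0 where "u0 \<noteq> 0" and hT0: "affine hull T = {x. u0 \<bullet> x = b0}"
    using aff_dim_eq_hyperplane[of T] by auto
  have rnot: "r \<notin> affine hull T"
    using i1 rT unfolding S1 affine_dependent_def by (metis Diff_insert_absorb insertI1)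
  have snot: "s \<notin> affine hull T"
    using i2 sT unfolding S2 affine_dependent_def by (metis Diff_insert_absorb insertI1)
  obtain u b where hT: "affine hull T = {x. u \<bullet> x = b}" and rpos: "u \<bullet> r > b"
  proof (cases "u0 \<bullet> r > b0")
    case True then show ?thesis using that hT0 by blast
  next
    case False
    then have "(-u0) \<bullet> r > -b0" using rnot hT0 by auto
    moreover have "affine hull T = {x. (-u0) \<bullet> x = -b0}" using hT0 by auto
    ultimately show ?thesis using that by blast
  qed
  have sne: "u \<bullet> s \<noteq> b" using snot hT by auto
  have onT: "\<forall>t\<in>T. u \<bullet> t = b" using hT hull_inc[of _ T affine] by blast
  have "aff_dim S2 = int DIM(real^'d)" using aff_dim_affine_independent[OF i2] c2 by simp
  then have hull2: "affine hull (insert s T) = UNIV" using aff_dim_eq_full S2 by blast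
  have inter: "convex hull (insert r T) \<inter> convex hull (insert s T) \<subseteq> {x. u \<bullet> x = b}"
    using IT S1 S2 convex_hull_subset_affine_hull hT by blast
  have sneg: "u \<bullet> s < b"
    using opposite_sides[OF finT Tne rT sT hull2 inter onT rpos sne] .
  have rs: "r \<noteq> s" using rpos sneg by auto
  define Z where "Z = insert r (insert s T)"
  have finZ: "finite Z" using finT by (simp add: Z_def)
  have ZA: "Z \<subseteq> A" using A1 A2 S1 S2 Z_def by auto
  define l where "l x = u \<bullet> x - b" for x
  define U where "U D = (SOME W. sum W D = 0 \<and> (\<exists>v\<in>D. W v \<noteq> 0) \<and> (\<Sum>v\<in>D. W v *\<^sub>R v) = 0)"
    for D :: "(real^'d) set"
  have U: "sum (U D) D = 0 \<and> (\<exists>v\<in>D. U D v \<noteq> 0) \<and> (\<Sum>v\<in>D. U D v *\<^sub>R v) = 0"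
    if "D \<subseteq> A" "affine_dependent D" for D
  proof -
    have "finite D" using that finA finite_subset by blast
    then have "\<exists>W. sum W D = 0 \<and> (\<exists>v\<in>D. W v \<noteq> 0) \<and> (\<Sum>v\<in>D. W v *\<^sub>R v) = 0"
      using that affine_dependent_explicit_finite by blast
    then show ?thesis unfolding U_def by (rule someI_ex)
  qed
  obtain idx :: "real^'d \<Rightarrow> nat" where inj: "inj_on idx (A - Z)"
    using finite_imp_inj_to_nat_seg[of "A - Z"] finA by blast
  define M where "M = (\<Sum>a\<in>A. \<bar>l a\<bar>) + 1"
  have Mgt: "M > \<bar>l a\<bar>" if "a \<in> A" for a
  proof -
    have "\<bar>l a\<bar> \<le> (\<Sum>a\<in>A. \<bar>l a\<bar>)" using finA that by (intro member_le_sum) auto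
    then show ?thesis unfolding M_def by simp
  qed
  define ht where "ht t a = (if a \<in> Z then \<bar>l a\<bar> else M + t ^ (idx a + 1))" for t :: real and a
  define Bad where "Bad D = (affine_dependent D \<and> (\<exists>x\<in>D-Z. U D x \<noteq> 0))" for D
  define pD where "pD D = [: (\<Sum>a\<in>D\<inter>Z. U D a * \<bar>l a\<bar>) + M * (\<Sum>a\<in>D-Z. U D a) :]
      + (\<Sum>a\<in>D-Z. monom (U D a) (idx a + 1))" for D
  have poly_eq: "poly (pD D) t = (\<Sum>a\<in>D. U D a * ht t a)" if "D \<subseteq> A" for D t
  proof -
    have finD: "finite D" using that finA finite_subset by blast
    have "(\<Sum>a\<in>D. U D a * ht t a) = (\<Sum>a\<in>D\<inter>Z. U D a * ht t a) + (\<Sum>a\<in>D-Z. U D a * ht t a)"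
      using finD by (metis sum.Int_Diff)
    also have "(\<Sum>a\<in>D\<inter>Z. U D a * ht t a) = (\<Sum>a\<in>D\<inter>Z. U D a * \<bar>l a\<bar>)"
      by (intro sum.cong) (auto simp: ht_def)
    also have "(\<Sum>a\<in>D-Z. U D a * ht t a) = (\<Sum>a\<in>D-Z. M * U D a + U D a * t ^ (idx a + 1))"
      by (intro sum.cong) (auto simp: ht_def algebra_simps)
    also have "\<dots> = M * (\<Sum>a\<in>D-Z. U D a) + (\<Sum>a\<in>D-Z. U D a * t ^ (idx a + 1))"
      by (simp add: sum.distrib sum_distrib_left)
    finally show ?thesis unfolding pD_def by (simp add: poly_sum poly_monom)
  qed
  have pD_nz: "pD D \<noteq> 0" if DA: "D \<subseteq> A" and bad: "Bad D" for D
  proof -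
    have finD: "finite D" using DA finA finite_subset by blast
    obtain x where x: "x \<in> D - Z" "U D x \<noteq> 0" using bad unfolding Bad_def by blast
    have "coeff (pD D) (idx x + 1) = (\<Sum>a\<in>D-Z. if idx a = idx x then U D a else 0)"
      unfolding pD_def by (simp add: coeff_sum coeff_monom)
    also have "\<dots> = (\<Sum>a\<in>D-Z. if a = x then U D a else 0)"
    proof (intro sum.cong refl)
      fix a assume "a \<in> D - Z"
      then have "idx a = idx x \<longleftrightarrow> a = x" using inj x DA unfolding inj_on_def by blast
      then show "(if idx a = idx x then U D a else 0) = (if a = x then U D a else 0)" by simp
    qed
    also have "\<dots> = U D x" using x finD by simp
    finally show ?thesis using x by auto
  qed
  define Bset where "Bset = (\<Union>D\<in>{D. D \<subseteq> A \<and> Bad D}. {t. poly (pD D) t = 0})"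
  have "finite Bset" unfolding Bset_def
    using finA pD_nz by (intro finite_UN_I) (auto intro: poly_roots_finite)
  moreover have "infinite {0::real<..}" by (rule infinite_Ioi)
  ultimately have "infinite ({0::real<..} - Bset)" by (simp add: Diff_infinite_finite)
  then obtain t where "t \<in> {0::real<..} - Bset" using infinite_imp_nonempty by blast
  then have tpos: "t > 0" and tB: "t \<notin> Bset" by auto
  define h where "h = ht t"
  have hZ: "h z = \<bar>l z\<bar>" if "z \<in> Z" for z using that by (simp add: h_def ht_def)
  have hO: "h a > \<bar>l a\<bar>" if "a \<in> A" "a \<notin> Z" for a
  proof -
    have "t ^ (idx a + 1) > 0" using tpos by simp
    then show ?thesis using that Mgt[of a] by (simp add: h_def ht_def del: power_Suc)
  qed
  have lT: "l x = 0" if "x \<in> T" for x using onT that by (simp add: l_def)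
  have lr: "l r > 0" and ls: "l s < 0" using rpos sneg by (auto simp: l_def)
  have sub1: "S1 \<in> regular_subdivision A h"
  proof (rule cell_in_subdiv[OF finA A1, where v = u and c = "-b" and h = h])
    show "S1 \<noteq> {}" using S1 by simp
    show "\<forall>a\<in>S1. h a - u \<bullet> a = - b"
      using S1 hZ lT lr unfolding Z_def by (auto simp: l_def)
    show "\<forall>a\<in>A - S1. h a - u \<bullet> a > - b"
    proof
      fix a assume a: "a \<in> A - S1"
      show "h a - u \<bullet> a > - b"
      proof (cases "a \<in> Z")
        case True
        then have "a = s" using a S1 Z_def by auto
        then show ?thesis using hZ[of s] ls Z_def by (auto simp: l_def)
      next
        case False
        then show ?thesis using hO[of a] a by (auto simp: l_def)
      qed
    qed
  qed
  have sub2: "S2 \<in> regular_subdivision A h"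
  proof (rule cell_in_subdiv[OF finA A2, where v = "-u" and c = b and h = h])
    show "S2 \<noteq> {}" using S2 by simp
    show "\<forall>a\<in>S2. h a - (-u) \<bullet> a = b"
      using S2 hZ lT ls unfolding Z_def by (auto simp: l_def)
    show "\<forall>a\<in>A - S2. h a - (-u) \<bullet> a > b"
    proof
      fix a assume a: "a \<in> A - S2"
      show "h a - (-u) \<bullet> a > b"
      proof (cases "a \<in> Z")
        case True
        then have "a = r" using a S2 Z_def by auto
        then show ?thesis using hZ[of r] lr Z_def by (auto simp: l_def)
      next
        case False
        then show ?thesis using hO[of a] a by (auto simp: l_def)
      qed
    qed
  qed
  have indep: "\<not> affine_dependent C" if C: "C \<in> regular_subdivision A h" for C
  proof
    assume dep: "affine_dependent C"
    have CA: "C \<subseteq> A" using C unfolding regular_subdivision_def cell_of_def by auto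
    have finC: "finite C" using CA finA finite_subset by blast
    obtain v c where aff: "\<forall>a\<in>C. h a = v \<bullet> a + c" using cell_affine[OF C] by blast
    note UC = U[OF CA dep]
    have "(\<Sum>a\<in>C. U C a * h a) = (\<Sum>a\<in>C. v \<bullet> (U C a *\<^sub>R a) + c * U C a)"
      using aff by (intro sum.cong) (auto simp: algebra_simps)
    also have "\<dots> = v \<bullet> (\<Sum>a\<in>C. U C a *\<^sub>R a) + c * sum (U C) C"
      by (simp add: sum.distrib inner_sum_right sum_distrib_left)
    also have "\<dots> = 0" using UC by simp
    finally have sum0: "(\<Sum>a\<in>C. U C a * h a) = 0" .
    show False
    proof (cases "Bad C")
      case True
      have "poly (pD C) t = 0" using sum0 poly_eq[OF CA, of t] unfolding h_def by simp
      then have "t \<in> Bset" using CA True unfolding Bset_def by blast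
      then show False using tB by simp
    next
      case False
      then have out0: "\<forall>x\<in>C-Z. U C x = 0" using dep unfolding Bad_def by blast
      define W where "W z = (if z \<in> C then U C z else 0)" for z
      have red: "(\<Sum>z\<in>Z. W z * g z) = (\<Sum>a\<in>C. U C a * g a)" for g :: "real^'d \<Rightarrow> real"
      proof -
        have "(\<Sum>z\<in>Z. W z * g z) = (\<Sum>z\<in>Z. if z \<in> C then U C z * g z else 0)"
          by (intro sum.cong) (auto simp: W_def)
        also have "\<dots> = (\<Sum>z\<in>Z\<inter>C. U C z * g z)"
          using finZ by (simp add: sum.inter_restrict)
        also have "\<dots> = (\<Sum>a\<in>C. U C a * g a)"
          using finC out0 by (intro sum.mono_neutral_left) auto
        finally show ?thesis .
      qed
      have redv: "(\<Sum>z\<in>Z. W z *\<^sub>R z) = (\<Sum>a\<in>C. U C a *\<^sub>R a)"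
      proof -
        have "(\<Sum>z\<in>Z. W z *\<^sub>R z) = (\<Sum>z\<in>Z. if z \<in> C then U C z *\<^sub>R z else 0)"
          by (intro sum.cong) (auto simp: W_def)
        also have "\<dots> = (\<Sum>z\<in>Z\<inter>C. U C z *\<^sub>R z)"
          using finZ by (simp add: sum.inter_restrict)
        also have "\<dots> = (\<Sum>a\<in>C. U C a *\<^sub>R a)"
          using finC out0 by (intro sum.mono_neutral_left) auto
        finally show ?thesis .
      qed
      have W0: "sum W Z = 0" using red[of "\<lambda>_. 1"] UC by simp
      have Wv: "(\<Sum>z\<in>Z. W z *\<^sub>R z) = 0" using redv UC by simp
      obtain v0 where v0: "v0 \<in> C" "U C v0 \<noteq> 0" using UC by blast
      then have "v0 \<in> Z" using out0 by blast
      then have Wnz: "\<exists>z\<in>Z. W z \<noteq> 0" using v0 unfolding W_def by auto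
      have "(\<Sum>z\<in>Z. W z * \<bar>u \<bullet> z - b\<bar>) \<noteq> 0"
        unfolding Z_def by (rule Z_dep[OF finT rT sT rs indT onT rpos sneg]) (use W0 Wv Wnz in \<open>simp_all add: Z_def\<close>)
      moreover have "(\<Sum>z\<in>Z. W z * \<bar>u \<bullet> z - b\<bar>) = (\<Sum>z\<in>Z. W z * h z)"
        using hZ by (intro sum.cong) (auto simp: l_def)
      ultimately show False using red[of h] sum0 by simp
    qed
  qed
  have tri: "regular_triangulation A h"
    unfolding regular_triangulation_def
  proof
    fix C assume C: "C \<in> regular_subdivision A h"
    have "\<not> affine_dependent C" using indep[OF C] .
    moreover then have "{x. x extreme_point_of convex hull C} = C"
      using extreme_point_of_convex_hull_affine_independent by blast
    ultimately show "\<not> affine_dependent C \<and> {x. x extreme_point_of convex hull C} = C" by blast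
  qed
  show ?thesis using sub1 sub2 tri unfolding cone_C_def by blast
qed


end
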